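(* Let $\mathcal A,\mathcal B>0$, $\alpha,\beta\in(0,1)$, $h,\tau>0$, $N\ge1$, and assume $$\frac{\tau^{\alpha}(-\alpha^2+4\alpha-2)\mathcal A+\tau^{\beta}(-\beta^2+4\beta-2)\mathcal B}{h^2}\le\frac{37}{120}.$$ Fix a real $\theta$, let $s=\sin^2(\theta h/2)$, and let $\xi_0\in\mathbb C$ and $\xi_1,\dots,\xi_N$ be defined by $$\mathcal Q\,\xi_{k+1}=\mathcal P\,\xi_k-4s\Big[1+\tfrac13 s\Big]\sum_{\ell=2}^{k+1}g_\ell^{(\alpha,\beta)}\xi_{k+1-\ell},\qquad k=0,1,\dots,N-1,$$ where $\mathcal Q=[1-\frac{8}{45}s^2]+4g_0^{(\alpha,\beta)}s[1+\frac13 s]$ and $\mathcal P=[1-\frac{8}{45}s^2]-4g_1^{(\alpha,\beta)}s[1+\frac13 s]$. Then $|\xi_{k+1}|\le|\xi_0|$ for $k=0,1,\dots,N-1$.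
   Context: $\varpi_\ell^{(\sigma)}=(-1)^\ell\binom{\sigma}{\ell}$, $g_0^{(\sigma)}=\frac{1+\sigma}{2}\varpi_0^{(\sigma)}$, $g_\ell^{(\sigma)}=\frac{1+\sigma}{2}\varpi_\ell^{(\sigma)}+\frac{1-\sigma}{2}\varpi_{\ell-1}^{(\sigma)}$ ($\ell\ge1$); $\mu_\alpha=\tau^\alpha\mathcal A/h^2$, $\mu_\beta=\tau^\beta\mathcal B/h^2$, $g_\ell^{(\alpha,\beta)}=\mu_\alpha g_\ell^{(1-\alpha)}+\mu_\beta g_\ell^{(1-\beta)}$. The sum is empty for $k=0$. *)

theory Defs
  imports Complex_Main
begin

definition varpi :: "real \<Rightarrow> nat \<Rightarrow> real" where
  "varpi \<sigma> l = (-1) ^ l * (\<sigma> gchoose l)"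

definition gw :: "real \<Rightarrow> nat \<Rightarrow> real" where
  "gw \<sigma> l = (if l = 0 then (1 + \<sigma>) / 2 * varpi \<sigma> 0
              else (1 + \<sigma>) / 2 * varpi \<sigma> l + (1 - \<sigma>) / 2 * varpi \<sigma> (l - 1))"

definition gab :: "real \<Rightarrow> real \<Rightarrow> real \<Rightarrow> real \<Rightarrow> real \<Rightarrow> real \<Rightarrow> nat \<Rightarrow> real" where
  "gab \<A> \<B> \<alpha> \<beta> h \<tau> l =
     (\<tau> powr \<alpha> * \<A> / h^2) * gw (1 - \<alpha>) l + (\<tau> powr \<beta> * \<B> / h^2) * gw (1 - \<beta>) l"

end

theory Submission
  imports Defs
begin


lemma gch_Suc: "(a::real) gchoose (Suc k) = (a - real k) / (real k + 1) * (a gchoose k)"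
  using gbinomial_mult_1[of a k] by (simp add: field_simps)

lemma varpi_0[simp]: "varpi s 0 = 1" by (simp add: varpi_def)
lemma varpi_1[simp]: "varpi s (Suc 0) = - s" by (simp add: varpi_def)

lemma varpi_Suc: "varpi s (Suc l) = varpi s l * (real l - s) / (real l + 1)"
  unfolding varpi_def gch_Suc by (simp add: field_simps)

lemma varpi_neg: assumes "0 < s" "s < 1" "l \<ge> 1" shows "varpi s l \<le> 0"
  using assms(3)
proof (induction l rule: dec_induct)
  case base then show ?case using assms by simp
next
  case (step n)
  have "real n - s \<ge> 0" using step(1) assms by simp
  then show ?case using step(3) by (simp add: varpi_Suc mult_nonpos_nonneg divide_nonpos_pos)
qed

lemma varpi_psum: "(\<Sum>l\<le>n. varpi s l) = varpi (s - 1) n"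
proof (induction n)
  case 0 then show ?case by simp
next
  case (Suc n)
  have "varpi s (Suc n) = varpi (s-1) (Suc n) - varpi (s-1) n"
    using gbinomial_Suc_Suc[of "s-1" n] by (simp add: varpi_def algebra_simps)
  then show ?case using Suc by (simp add: algebra_simps)
qed

lemma varpi_m1_pos: assumes "s < 1" shows "varpi (s - 1) n \<ge> 0"
proof (induction n)
  case 0 then show ?case by simp
next
  case (Suc n)
  have "real n - (s - 1) \<ge> 0" using assms by simp
  then show ?case using Suc by (simp add: varpi_Suc)
qed

lemma gw_psum: "(\<Sum>l\<le>n. gw s l) = (1+s)/2 * (\<Sum>l\<le>n. varpi s l)
   + (1-s)/2 * (if n = 0 then 0 else (\<Sum>l\<le>n-1. varpi s l))"
proof (induction n)
  case 0 then show ?case by (simp add: gw_def)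
next
  case (Suc n)
  show ?case
  proof (cases n)
    case 0 then show ?thesis by (simp add: gw_def field_simps)
  next
    case (Suc m)
    then show ?thesis using Suc.IH by (simp add: gw_def algebra_simps)
  qed
qed

lemma gw_psum_nonneg: assumes "0 < s" "s < 1" shows "(\<Sum>l\<le>n. gw s l) \<ge> 0"
  unfolding gw_psum varpi_psum using varpi_m1_pos[of s] assms
  by (intro add_nonneg_nonneg mult_nonneg_nonneg) auto

lemma gw_neg: assumes "0 < s" "s < 1" "l \<ge> 2" shows "gw s l \<le> 0"
proof -
  have "varpi s l \<le> 0" "varpi s (l-1) \<le> 0" using varpi_neg assms by auto
  then show ?thesis using assms unfolding gw_def
    by (simp add: add_nonpos_nonpos mult_nonneg_nonpos)
qed

lemma gw_tail: assumes "0 < s" "s < 1"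
  shows "(\<Sum>l=2..k+1. gw s l) \<ge> - (gw s 0 + gw s 1)"
proof -
  have "{..k+1} = {0,1} \<union> {2..k+1}" by auto
  then have "(\<Sum>l\<le>k+1. gw s l) = gw s 0 + gw s 1 + (\<Sum>l=2..k+1. gw s l)"
    by (simp add: sum.union_disjoint)
  then show ?thesis using gw_psum_nonneg[OF assms, of "k+1"] by linarith
qed



theorem lemma7:
  fixes \<A> \<B> \<alpha> \<beta> h \<tau> \<theta> :: real and N :: nat and \<xi> :: "nat \<Rightarrow> complex"
  assumes "\<A> > 0" "\<B> > 0" "0 < \<alpha>" "\<alpha> < 1" "0 < \<beta>" "\<beta> < 1" "h > 0" "\<tau> > 0" "N \<ge> 1"
    and "(\<tau> powr \<alpha> * (4*\<alpha> - \<alpha>^2 - 2) * \<A> + \<tau> powr \<beta> * (4*\<beta> - \<beta>^2 - 2) * \<B>) / h^2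
           \<le> 37 / 120"
    and "\<And>k. k < N \<Longrightarrow>
      complex_of_real ((1 - 8/45 * ((sin (\<theta> * h / 2))^2)^2)
          + 4 * gab \<A> \<B> \<alpha> \<beta> h \<tau> 0 * (sin (\<theta> * h / 2))^2 * (1 + (sin (\<theta> * h / 2))^2 / 3))
        * \<xi> (Suc k)
      = complex_of_real ((1 - 8/45 * ((sin (\<theta> * h / 2))^2)^2)
          - 4 * gab \<A> \<B> \<alpha> \<beta> h \<tau> 1 * (sin (\<theta> * h / 2))^2 * (1 + (sin (\<theta> * h / 2))^2 / 3))
        * \<xi> k
        - complex_of_real (4 * (sin (\<theta> * h / 2))^2 * (1 + (sin (\<theta> * h / 2))^2 / 3))
          * (\<Sum>l = 2..k+1. complex_of_real (gab \<A> \<B> \<alpha> \<beta> h \<tau> l) * \<xi> (k + 1 - l))"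
  shows "\<forall>k < N. cmod (\<xi> (Suc k)) \<le> cmod (\<xi> 0)"

proof -
  define s where "s = (sin (\<theta> * h / 2))^2"
  define D where "D = 1 - 8/45 * s^2"
  define c where "c = 4 * s * (1 + s / 3)"
  define G where "G = gab \<A> \<B> \<alpha> \<beta> h \<tau>"
  define a where "a = \<tau> powr \<alpha> * \<A> / h^2"
  define b where "b = \<tau> powr \<beta> * \<B> / h^2"
  define M where "M = cmod (\<xi> 0)"
  have s0: "0 \<le> s" unfolding s_def by simp
  have s1: "s \<le> 1" unfolding s_def using abs_sin_le_one[of "\<theta> * h / 2"] by (metis abs_le_square_iff abs_one one_power2)
  have ss: "s * s \<le> s" using s0 s1 by (simp add: mult_left_le)
  have c0: "c \<ge> 0" unfolding c_def using s0 by simp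
  have D0: "D > 0" unfolding D_def using s0 s1 ss by (simp add: power2_eq_square)
  have a0: "a > 0" unfolding a_def using assms by simp
  have b0: "b > 0" unfolding b_def using assms by simp
  have Gl: "G l = a * gw (1 - \<alpha>) l + b * gw (1 - \<beta>) l" for l
    unfolding G_def a_def b_def gab_def by simp
  have G0: "G 0 > 0"
  proof -
    have "a * (2 - \<alpha>) > 0" "b * (2 - \<beta>) > 0" using a0 b0 assms(4,6) by simp_all
    then show ?thesis unfolding Gl by (simp add: gw_def)
  qed
  have Gneg: "G l \<le> 0" if "l \<ge> 2" for l
    unfolding Gl using a0 b0 assms that gw_neg[of "1-\<alpha>" l] gw_neg[of "1-\<beta>" l]
    by (simp add: add_nonpos_nonpos mult_nonneg_nonpos)
  have Gtail: "(\<Sum>l=2..k+1. G l) \<ge> - (G 0 + G 1)" for k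
  proof -
    have "(\<Sum>l=2..k+1. G l) = a * (\<Sum>l=2..k+1. gw (1-\<alpha>) l) + b * (\<Sum>l=2..k+1. gw (1-\<beta>) l)"
      unfolding Gl by (simp only: sum.distrib sum_distrib_left)
    also have "\<dots> \<ge> a * (- (gw (1-\<alpha>) 0 + gw (1-\<alpha>) 1)) + b * (- (gw (1-\<beta>) 0 + gw (1-\<beta>) 1))"
    proof (rule add_mono)
      show "a * (- (gw (1-\<alpha>) 0 + gw (1-\<alpha>) 1)) \<le> a * (\<Sum>l=2..k+1. gw (1-\<alpha>) l)"
        using gw_tail[of "1-\<alpha>" k] a0 assms(3,4) by (intro mult_left_mono) auto
      show "b * (- (gw (1-\<beta>) 0 + gw (1-\<beta>) 1)) \<le> b * (\<Sum>l=2..k+1. gw (1-\<beta>) l)"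
        using gw_tail[of "1-\<beta>" k] b0 assms(5,6) by (intro mult_left_mono) auto
    qed
    finally show ?thesis unfolding Gl by (simp add: algebra_simps)
  qed
  have gw1: "gw (1 - x) 1 = (4*x - x^2 - 2) / 2" for x
    by (simp add: gw_def power2_eq_square field_simps)
  have G1: "2 * G 1 \<le> 37/120"
  proof -
    have "2 * G 1 = (\<tau> powr \<alpha> * (4*\<alpha> - \<alpha>^2 - 2) * \<A> + \<tau> powr \<beta> * (4*\<beta> - \<beta>^2 - 2) * \<B>) / h^2"
      unfolding Gl gw1 a_def b_def using assms(7) by (simp add: field_simps)
    then show ?thesis using assms(10) by simp
  qed
  have cG1: "c * G 1 \<le> D"
  proof (cases "G 1 \<le> 0")
    case True then show ?thesis using c0 D0 by (smt (verit) mult_nonneg_nonpos)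
  next
    case False
    have "c * G 1 \<le> c * (37/240)" using G1 c0 by (intro mult_left_mono) auto
    also have "\<dots> \<le> D" unfolding c_def D_def using s0 s1 ss by (simp add: power2_eq_square field_simps)
    finally show ?thesis .
  qed
  have rec: "complex_of_real (D + c * G 0) * \<xi> (Suc k) = complex_of_real (D - c * G 1) * \<xi> k
        - complex_of_real c * (\<Sum>l = 2..k+1. complex_of_real (G l) * \<xi> (k + 1 - l))" if "k < N" for k
  proof -
    have e1: "4 * G 0 * s * (1 + s / 3) = c * G 0" "4 * G 1 * s * (1 + s / 3) = c * G 1"
      unfolding c_def by (simp_all add: algebra_simps)
    show ?thesis using assms(11)[OF that]
      unfolding s_def[symmetric] G_def[symmetric] D_def[symmetric] c_def[symmetric] e1 .
  qed
  have H: "cmod (\<xi> (Suc k)) \<le> M" if k: "k < N" and IH: "\<forall>j\<le>k. cmod (\<xi> j) \<le> M" for k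
  proof -
    define S where "S = (\<Sum>l = 2..k+1. complex_of_real (G l) * \<xi> (k + 1 - l))"
    have Q0: "D + c * G 0 > 0" using D0 c0 G0 by (simp add: add_pos_nonneg)
    have M0: "M \<ge> 0" unfolding M_def by simp
    have "cmod S \<le> (\<Sum>l = 2..k+1. cmod (complex_of_real (G l) * \<xi> (k + 1 - l)))"
      unfolding S_def by (rule norm_sum)
    also have "\<dots> \<le> (\<Sum>l = 2..k+1. (- G l) * M)"
    proof (rule sum_mono)
      fix l assume l: "l \<in> {2..k+1}"
      have "cmod (complex_of_real (G l) * \<xi> (k + 1 - l)) = (- G l) * cmod (\<xi> (k + 1 - l))"
        using Gneg[of l] l by (simp add: norm_mult)
      also have "\<dots> \<le> (- G l) * M" using IH l Gneg[of l] by (intro mult_left_mono) auto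
      finally show "cmod (complex_of_real (G l) * \<xi> (k + 1 - l)) \<le> (- G l) * M" .
    qed
    also have "\<dots> = - (\<Sum>l = 2..k+1. G l) * M" by (simp only: sum_negf sum_distrib_right mult_minus_left)
    also have "\<dots> \<le> (G 0 + G 1) * M" using Gtail[of k] M0 by (intro mult_right_mono) auto
    finally have cS: "cmod S \<le> (G 0 + G 1) * M" .
    have "(D + c * G 0) * cmod (\<xi> (Suc k)) = cmod (complex_of_real (D + c * G 0) * \<xi> (Suc k))"
      by (simp only: norm_mult norm_of_real abs_of_pos[OF Q0])
    also have "\<dots> = cmod (complex_of_real (D - c * G 1) * \<xi> k - complex_of_real c * S)"
      using rec[OF k] unfolding S_def by simp
    also have "\<dots> \<le> cmod (complex_of_real (D - c * G 1) * \<xi> k) + cmod (complex_of_real c * S)"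
      by (rule norm_triangle_ineq4)
    also have "\<dots> = \<bar>D - c * G 1\<bar> * cmod (\<xi> k) + c * cmod S"
      by (simp only: norm_mult norm_of_real abs_of_nonneg[OF c0])
    also have "\<dots> \<le> \<bar>D - c * G 1\<bar> * M + c * ((G 0 + G 1) * M)"
      using IH cS c0 by (intro add_mono mult_left_mono) auto
    also have "\<dots> = (\<bar>D - c * G 1\<bar> + c * (G 0 + G 1)) * M" by (simp add: algebra_simps)
    also have "\<dots> \<le> (D + c * G 0) * M"
      using cG1 M0 by (intro mult_right_mono) (auto simp: abs_if algebra_simps)
    finally show ?thesis using Q0 by simp
  qed
  have "k \<le> N \<longrightarrow> (\<forall>j\<le>k. cmod (\<xi> j) \<le> M)" for k
  proof (induction k)
    case 0 then show ?case unfolding M_def by simp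
  next
    case (Suc k)
    show ?case
    proof
      assume "Suc k \<le> N"
      then have k: "k < N" by simp
      then have IH: "\<forall>j\<le>k. cmod (\<xi> j) \<le> M" using Suc by simp
      have "cmod (\<xi> (Suc k)) \<le> M" by (rule H[OF k IH])
      then show "\<forall>j\<le>Suc k. cmod (\<xi> j) \<le> M" using IH le_Suc_eq by auto
    qed
  qed
  then show ?thesis unfolding M_def by (meson Suc_leI order_refl)
qed

end
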